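(* If $G\neq K_4$ is a connected, claw-free cubic graph, then there exists a vertex cover $P$ of $G$ such that every triangle of $G$ contains exactly two vertices from $P$.
   Context: A graph is claw-free if it has no induced subgraph isomorphic to $K_{1,3}$; it is cubic if every vertex has degree $3$. A vertex cover is a set of vertices meeting every edge. *)

theory Defs
  imports Main
begin

definition simple_graph :: "'a set \<Rightarrow> ('a \<Rightarrow> 'a \<Rightarrow> bool) \<Rightarrow> bool" where
  "simple_graph V E \<longleftrightarrow> finite V \<and> (\<forall>u v. E u v \<longrightarrow> u \<in> V \<and> v \<in> V) \<and>
     (\<forall>u v. E u v \<longrightarrow> E v u) \<and> (\<forall>v. \<not> E v v)"

definition neighbours :: "'a set \<Rightarrow> ('a \<Rightarrow> 'a \<Rightarrow> bool) \<Rightarrow> 'a \<Rightarrow> 'a set" where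
  "neighbours V E v = {u \<in> V. E v u}"

definition cubic :: "'a set \<Rightarrow> ('a \<Rightarrow> 'a \<Rightarrow> bool) \<Rightarrow> bool" where
  "cubic V E \<longleftrightarrow> (\<forall>v\<in>V. card (neighbours V E v) = 3)"

definition connected_graph :: "'a set \<Rightarrow> ('a \<Rightarrow> 'a \<Rightarrow> bool) \<Rightarrow> bool" where
  "connected_graph V E \<longleftrightarrow> V \<noteq> {} \<and> (\<forall>u\<in>V. \<forall>v\<in>V. E\<^sup>*\<^sup>* u v)"

definition claw_free :: "'a set \<Rightarrow> ('a \<Rightarrow> 'a \<Rightarrow> bool) \<Rightarrow> bool" where
  "claw_free V E \<longleftrightarrow> \<not> (\<exists>v\<in>V. \<exists>a b c. E v a \<and> E v b \<and> E v c \<and>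
      a \<noteq> b \<and> a \<noteq> c \<and> b \<noteq> c \<and> \<not> E a b \<and> \<not> E a c \<and> \<not> E b c)"

definition is_K4 :: "'a set \<Rightarrow> ('a \<Rightarrow> 'a \<Rightarrow> bool) \<Rightarrow> bool" where
  "is_K4 V E \<longleftrightarrow> card V = 4 \<and> (\<forall>u\<in>V. \<forall>v\<in>V. u \<noteq> v \<longrightarrow> E u v)"

definition vertex_cover :: "'a set \<Rightarrow> ('a \<Rightarrow> 'a \<Rightarrow> bool) \<Rightarrow> 'a set \<Rightarrow> bool" where
  "vertex_cover V E P \<longleftrightarrow> P \<subseteq> V \<and> (\<forall>u v. E u v \<longrightarrow> u \<in> P \<or> v \<in> P)"

definition triangles :: "'a set \<Rightarrow> ('a \<Rightarrow> 'a \<Rightarrow> bool) \<Rightarrow> 'a set set" where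
  "triangles V E = {{a, b, c} | a b c. a \<in> V \<and> b \<in> V \<and> c \<in> V \<and>
      a \<noteq> b \<and> a \<noteq> c \<and> b \<noteq> c \<and> E a b \<and> E a c \<and> E b c}"

end

theory Submission
  imports Defs
begin

lemma hall:
  fixes A :: "'i \<Rightarrow> 'e set"
  assumes "finite N" "\<forall>i\<in>N. finite (A i)" "\<forall>S\<subseteq>N. card S \<le> card (\<Union>(A ` S))"
  shows "\<exists>f. (\<forall>i\<in>N. f i \<in> A i) \<and> inj_on f N"
  using assms
proof (induction N arbitrary: A rule: finite_psubset_induct)
  case (psubset N)
  show ?case
  proof (cases "\<exists>S. S \<noteq> {} \<and> S \<subset> N \<and> card (\<Union>(A ` S)) = card S")
    case True
    then obtain S where S: "S \<noteq> {}" "S \<subset> N" "card (\<Union>(A ` S)) = card S" by blast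
    have finS: "finite S" using S psubset.hyps finite_subset by blast
    have finU: "finite (\<Union>(A ` S))" using finS S psubset.prems by auto
    obtain f1 where f1: "\<forall>i\<in>S. f1 i \<in> A i" "inj_on f1 S"
      using psubset.IH[OF S(2), of A] psubset.prems S by auto
    define A' where "A' = (\<lambda>i. A i - \<Union>(A ` S))"
    have "N - S \<subset> N" using S by blast
    moreover have "\<forall>i\<in>N - S. finite (A' i)" using psubset.prems by (auto simp: A'_def)
    moreover have "\<forall>T\<subseteq>N - S. card T \<le> card (\<Union>(A' ` T))"
    proof (intro allI impI)
      fix T assume T: "T \<subseteq> N - S"
      have finT: "finite T" using T psubset.hyps finite_subset by blast
      have finUT: "finite (\<Union>(A ` T))" using finT T psubset.prems by auto
      have eq: "\<Union>(A' ` T) = \<Union>(A ` (T \<union> S)) - \<Union>(A ` S)" by (auto simp: A'_def)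
      have "card (\<Union>(A ` (T \<union> S))) \<ge> card (T \<union> S)"
        using psubset.prems(2)[rule_format, of "T \<union> S"] T S by blast
      moreover have "card (T \<union> S) = card T + card S"
        using T finT finS by (subst card_Un_disjoint) auto
      moreover have "card (\<Union>(A ` (T \<union> S)) - \<Union>(A ` S)) = card (\<Union>(A ` (T \<union> S))) - card (\<Union>(A ` S))"
        by (rule card_Diff_subset) (use finU in auto)
      ultimately show "card T \<le> card (\<Union>(A' ` T))" using eq S(3) by simp
    qed
    ultimately obtain f2 where f2: "\<forall>i\<in>N - S. f2 i \<in> A' i" "inj_on f2 (N - S)"
      using psubset.IH[of "N - S" A'] by blast
    define f where "f = (\<lambda>i. if i \<in> S then f1 i else f2 i)"
    have "\<forall>i\<in>N. f i \<in> A i" using f1 f2 by (auto simp: f_def A'_def)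
    moreover have "inj_on f N"
    proof (rule inj_onI)
      fix i j assume ij: "i \<in> N" "j \<in> N" "f i = f j"
      show "i = j"
      proof (cases "i \<in> S"; cases "j \<in> S")
        assume "i \<in> S" "j \<in> S" thus ?thesis using ij f1 by (auto simp: f_def inj_on_def)
      next
        assume "i \<notin> S" "j \<notin> S" thus ?thesis using ij f2 by (auto simp: f_def inj_on_def)
      next
        assume a: "i \<in> S" "j \<notin> S"
        hence "f i \<in> \<Union>(A ` S)" using f1 by (auto simp: f_def)
        moreover have "f j \<notin> \<Union>(A ` S)" using a ij(2) f2(1) by (simp add: f_def A'_def)
        ultimately show ?thesis using ij by simp
      next
        assume a: "i \<notin> S" "j \<in> S"
        hence "f j \<in> \<Union>(A ` S)" using f1 by (auto simp: f_def)
        moreover have "f i \<notin> \<Union>(A ` S)" using a ij(1) f2(1) by (simp add: f_def A'_def)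
        ultimately show ?thesis using ij by simp
      qed
    qed
    ultimately show ?thesis by blast
  next
    case False
    show ?thesis
    proof (cases "N = {}")
      case True thus ?thesis by auto
    next
      case ne: False
      then obtain i0 where i0: "i0 \<in> N" by blast
      have "card {i0} \<le> card (A i0)" using psubset.prems(2)[rule_format, of "{i0}"] i0 by auto
      then obtain e where e: "e \<in> A i0" by fastforce
      define A' where "A' = (\<lambda>i. A i - {e})"
      have "N - {i0} \<subset> N" using i0 by blast
      moreover have "\<forall>i\<in>N - {i0}. finite (A' i)" using psubset.prems by (auto simp: A'_def)
      moreover have "\<forall>T\<subseteq>N - {i0}. card T \<le> card (\<Union>(A' ` T))"
      proof (intro allI impI)
        fix T assume T: "T \<subseteq> N - {i0}"
        show "card T \<le> card (\<Union>(A' ` T))"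
        proof (cases "T = {}")
          case True thus ?thesis by simp
        next
          case Tne: False
          have finT: "finite T" using T psubset.hyps finite_subset by blast
          have finUT: "finite (\<Union>(A ` T))" using finT T psubset.prems by auto
          have TN: "T \<subset> N" using T i0 by auto
          have "\<not> (T \<noteq> {} \<and> T \<subset> N \<and> card (\<Union>(A ` T)) = card T)" using False by blast
          hence "card T \<noteq> card (\<Union>(A ` T))" using Tne TN by auto
          moreover have "card T \<le> card (\<Union>(A ` T))" using psubset.prems T by auto
          moreover have "\<Union>(A' ` T) = \<Union>(A ` T) - {e}" by (auto simp: A'_def)
          moreover have "card (\<Union>(A ` T) - {e}) \<ge> card (\<Union>(A ` T)) - 1"
            using finUT by (simp add: card_Diff_singleton_if)
          ultimately show ?thesis by simp
        qed
      qed
      ultimately obtain f2 where f2: "\<forall>i\<in>N - {i0}. f2 i \<in> A' i" "inj_on f2 (N - {i0})"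
        using psubset.IH[of "N - {i0}" A'] by blast
      define f where "f = f2(i0 := e)"
      have "\<forall>i\<in>N. f i \<in> A i" using f2 e by (auto simp: f_def A'_def)
      moreover have "inj_on f N"
      proof (rule inj_onI)
        fix i j assume ij: "i \<in> N" "j \<in> N" "f i = f j"
        show "i = j"
        proof (rule ccontr)
          assume ne: "i \<noteq> j"
          show False
          proof (cases "i = i0 \<or> j = i0")
            case True
            thus False using ij ne f2(1) by (auto simp: f_def A'_def)
          next
            case False
            thus False using ij ne f2(2) by (auto simp: f_def inj_on_def)
          qed
        qed
      qed
      ultimately show ?thesis by blast
    qed
  qed
qed


locale cfc =
  fixes V :: "'a set" and E :: "'a \<Rightarrow> 'a \<Rightarrow> bool"
  assumes sg: "simple_graph V E"
    and conn: "connected_graph V E"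
    and cf: "claw_free V E"
    and cub: "cubic V E"
    and nk4: "\<not> is_K4 V E"
begin

lemma finV: "finite V" using sg by (simp add: simple_graph_def)
lemma inV1: "E u v \<Longrightarrow> u \<in> V" using sg by (simp add: simple_graph_def)
lemma inV2: "E u v \<Longrightarrow> v \<in> V" using sg by (simp add: simple_graph_def)
lemma sym: "E u v \<Longrightarrow> E v u" using sg by (simp add: simple_graph_def)
lemma irr: "\<not> E v v" using sg by (simp add: simple_graph_def)
lemma ne: "E u v \<Longrightarrow> u \<noteq> v" using irr by blast

lemma nb_iff: "u \<in> neighbours V E v \<longleftrightarrow> E v u"
  by (auto simp: neighbours_def intro: inV2)

lemma card_nb: "v \<in> V \<Longrightarrow> card (neighbours V E v) = 3"
  using cub by (simp add: cubic_def)

lemma fin_nb: "finite (neighbours V E v)"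
  using finV by (simp add: neighbours_def)

lemma nb_eq3:
  assumes "E v a" "E v b" "E v c" "a \<noteq> b" "a \<noteq> c" "b \<noteq> c"
  shows "neighbours V E v = {a,b,c}"
proof -
  have "{a,b,c} \<subseteq> neighbours V E v" using assms by (auto simp: nb_iff)
  moreover have "card {a,b,c} = 3" using assms by simp
  moreover have "card (neighbours V E v) = 3" using card_nb inV1 assms(1) by blast
  ultimately show ?thesis using card_subset_eq fin_nb by metis
qed

lemma no4:
  assumes "E v a" "E v b" "E v c" "E v d" "a \<noteq> b" "a \<noteq> c" "b \<noteq> c" "d \<noteq> a" "d \<noteq> b" "d \<noteq> c"
  shows False
  using nb_eq3[OF assms(1-3,5-7)] assms(4,8-10) by (auto simp: nb_iff[symmetric])

lemma nb_obtain:
  assumes "v \<in> V"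
  obtains x y z where "neighbours V E v = {x,y,z}" "x \<noteq> y" "y \<noteq> z" "x \<noteq> z"
  using card_nb[OF assms] by (auto simp: card_3_iff)

lemma third:
  assumes "E v a" "E v b" "a \<noteq> b"
  obtains c where "E v c" "c \<noteq> a" "c \<noteq> b"
proof -
  obtain x y z where xyz: "neighbours V E v = {x,y,z}" "x \<noteq> y" "y \<noteq> z" "x \<noteq> z"
    using nb_obtain inV1 assms(1) by blast
  have "a \<in> {x,y,z}" "b \<in> {x,y,z}" using assms xyz(1) by (auto simp: nb_iff[symmetric])
  then obtain c where "c \<in> {x,y,z}" "c \<noteq> a" "c \<noteq> b" using xyz assms(3) by auto
  thus ?thesis using that xyz(1) by (auto simp: nb_iff[symmetric])
qed

lemma K4:
  assumes "E v a" "E v b" "E v c" "E a b" "E a c" "E b c"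
  shows False
proof -
  define W where "W = {v,a,b,c}"
  have d: "v \<noteq> a" "v \<noteq> b" "v \<noteq> c" "a \<noteq> b" "a \<noteq> c" "b \<noteq> c" using assms ne by auto
  have closed: "\<And>w u. w \<in> W \<Longrightarrow> E w u \<Longrightarrow> u \<in> W"
  proof -
    fix w u assume w: "w \<in> W" and wu: "E w u"
    show "u \<in> W"
    proof (rule ccontr)
      assume u: "u \<notin> W"
      from w consider "w = v" | "w = a" | "w = b" | "w = c" by (auto simp: W_def)
      thus False
      proof cases
        case 1 thus False using no4[of v a b c u] assms d wu u W_def by auto
      next
        case 2 thus False using no4[of a v b c u] assms d wu u W_def sym by auto
      next
        case 3 thus False using no4[of b v a c u] assms d wu u W_def sym by auto
      next
        case 4 thus False using no4[of c v a b u] assms d wu u W_def sym by auto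
      qed
    qed
  qed
  have vV: "v \<in> V" using inV1 assms(1) by blast
  have "\<And>u. E\<^sup>*\<^sup>* v u \<Longrightarrow> u \<in> W"
  proof -
    fix u assume "E\<^sup>*\<^sup>* v u"
    thus "u \<in> W"
    proof (induction rule: rtranclp_induct)
      case base thus ?case by (simp add: W_def)
    next
      case (step y z) thus ?case using closed by blast
    qed
  qed
  hence "V \<subseteq> W" using conn vV by (auto simp: connected_graph_def)
  moreover have "W \<subseteq> V" using assms inV1 inV2 by (auto simp: W_def)
  ultimately have VW: "V = W" by blast
  have "card V = 4" using VW d by (simp add: W_def)
  moreover have "\<forall>x\<in>V. \<forall>y\<in>V. x \<noteq> y \<longrightarrow> E x y" using VW assms sym by (auto simp: W_def)
  ultimately show False using nk4 by (simp add: is_K4_def)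
qed

definition midw where "midw v a b c \<longleftrightarrow> E v a \<and> E v b \<and> E v c \<and> E a b \<and> E b c \<and> a \<noteq> c"
definition Mid where "Mid v \<longleftrightarrow> (\<exists>a b c. midw v a b c)"

lemma midw_basic:
  assumes "midw v a b c"
  shows "\<not> E a c" "neighbours V E v = {a,b,c}" "a \<noteq> b" "b \<noteq> c" "a \<noteq> c"
    "v \<noteq> a" "v \<noteq> b" "v \<noteq> c"
  using assms K4[of v a b c] nb_eq3[of v a b c] ne sym unfolding midw_def by blast+

lemma midw_sym: "midw v a b c \<Longrightarrow> midw v c b a"
  unfolding midw_def using sym by blast

lemma midw_partner: "midw v a b c \<Longrightarrow> midw b a v c"
  unfolding midw_def using sym by blast

lemma midw_end_not_mid:
  assumes "midw v a b c"
  shows "\<not> Mid a"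
proof
  assume "Mid a"
  then obtain p q r where pqr: "midw a p q r" by (auto simp: Mid_def)
  note b1 = midw_basic[OF assms] and b2 = midw_basic[OF midw_partner[OF assms]]
  and b3 = midw_basic[OF pqr]
  have av: "E a v" "E a b" using assms sym unfolding midw_def by blast+
  obtain w where w: "E a w" "w \<noteq> v" "w \<noteq> b" using third[OF av] b1 by blast
  have na: "neighbours V E a = {v,b,w}" using nb_eq3[OF av w(1)] w b1 by blast
  have "{p,q,r} = {v,b,w}" using na b3 by simp
  moreover have pqE: "E p q" "E q r" using pqr unfolding midw_def by blast+
  ultimately have "E w v \<or> E w b"
  proof -
    assume eq: "{p,q,r} = {v,b,w}"
    have wi: "w \<in> {p,q,r}" "p \<in> {v,b,w}" "q \<in> {v,b,w}" "r \<in> {v,b,w}" using eq by auto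
    from wi(1) consider "w = p" | "w = q" | "w = r" by blast
    thus ?thesis
    proof cases
      case 1 thus ?thesis using wi(3) pqE b3 by auto
    next
      case 2 thus ?thesis using wi(2) pqE b3 sym by auto
    next
      case 3 thus ?thesis using wi(3) pqE b3 sym by auto
    qed
  qed
  moreover have "E w v \<Longrightarrow> w \<in> {a,b,c}" using b1(2) sym by (auto simp: nb_iff[symmetric])
  moreover have "E w b \<Longrightarrow> w \<in> {a,v,c}" using b2(2) sym by (auto simp: nb_iff[symmetric])
  ultimately have "w = c" using w ne by blast
  thus False using w(1) b1(1) by simp
qed


lemma tri_form:
  assumes "T \<in> triangles V E" "v \<in> T"
  shows "\<exists>p q. T = {v,p,q} \<and> E v p \<and> E v q \<and> E p q"
proof -
  obtain a b c where T: "T = {a,b,c}" "E a b" "E a c" "E b c"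
    using assms(1) by (auto simp: triangles_def)
  from assms(2) T(1) consider "v = a" | "v = b" | "v = c" by blast
  thus ?thesis
  proof cases
    case 1 thus ?thesis using T by blast
  next
    case 2 thus ?thesis using T sym[OF T(2)] by (intro exI[of _ a] exI[of _ c]) auto
  next
    case 3 thus ?thesis using T sym[OF T(3)] sym[OF T(4)] by (intro exI[of _ a] exI[of _ b]) auto
  qed
qed

lemma tri_mem: "E v p \<Longrightarrow> E v q \<Longrightarrow> E p q \<Longrightarrow> {v,p,q} \<in> triangles V E"
proof -
  assume h: "E v p" "E v q" "E p q"
  have "v \<in> V \<and> p \<in> V \<and> q \<in> V \<and> v \<noteq> p \<and> v \<noteq> q \<and> p \<noteq> q \<and> E v p \<and> E v q \<and> E p q"
    using h inV1 inV2 ne by blast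
  thus ?thesis unfolding triangles_def by blast
qed

lemma tri_sub: "T \<in> triangles V E \<Longrightarrow> T \<subseteq> V"
  unfolding triangles_def by blast

lemma tri_card: "T \<in> triangles V E \<Longrightarrow> card T = 3"
  unfolding triangles_def by auto

lemma one_tri:
  assumes nm: "\<not> Mid v" and h: "E v a" "E v b" "E a b" "E v c" "E v d" "E c d"
  shows "{a,b} = {c,d}"
proof (rule ccontr)
  assume neq: "{a,b} \<noteq> {c,d}"
  have d: "a \<noteq> b" "c \<noteq> d" using h ne by auto
  have nmw: "\<And>x y z. \<not> midw v x y z" using nm by (auto simp: Mid_def)
  consider "a = c" | "a = d" | "b = c" | "b = d" | "a \<notin> {c,d} \<and> b \<notin> {c,d}" by blast
  thus False
  proof cases
    case 1 hence "b \<noteq> d" using neq by auto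
    thus False using nmw[of b a d] h 1 sym[OF h(3)] sym[OF h(6)] by (auto simp: midw_def)
  next
    case 2 hence "b \<noteq> c" using neq by auto
    thus False using nmw[of b a c] h 2 sym[OF h(3)] sym[OF h(6)] by (auto simp: midw_def)
  next
    case 3 hence "a \<noteq> d" using neq by auto
    thus False using nmw[of a b d] h 3 sym[OF h(3)] sym[OF h(6)] by (auto simp: midw_def)
  next
    case 4 hence "a \<noteq> c" using neq by auto
    thus False using nmw[of a b c] h 4 sym[OF h(3)] sym[OF h(6)] by (auto simp: midw_def)
  next
    case 5 thus False using no4[of v a b c d] h d by auto
  qed
qed

lemma uniq_tri:
  assumes "\<not> Mid v" "T1 \<in> triangles V E" "T2 \<in> triangles V E" "v \<in> T1" "v \<in> T2"
  shows "T1 = T2"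
proof -
  obtain p q where 1: "T1 = {v,p,q}" "E v p" "E v q" "E p q" using tri_form assms(2,4) by blast
  obtain p' q' where 2: "T2 = {v,p',q'}" "E v p'" "E v q'" "E p' q'" using tri_form assms(3,5) by blast
  have "{p,q} = {p',q'}" using one_tri[OF assms(1) 1(2-4) 2(2-4)] .
  thus ?thesis using 1(1) 2(1) by auto
qed

lemma uniq_out:
  assumes "T \<in> triangles V E" "v \<in> T" "E v y" "E v z" "y \<notin> T" "z \<notin> T"
  shows "y = z"
proof (rule ccontr)
  assume yz: "y \<noteq> z"
  obtain p q where 1: "T = {v,p,q}" "E v p" "E v q" "E p q" using tri_form assms(1,2) by blast
  show False using no4[of v p q y z] 1 assms yz ne by auto
qed

lemma mid_tri:
  assumes "midw m a b c" "T \<in> triangles V E" "m \<in> T"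
  shows "T = {m,a,b} \<or> T = {m,b,c}"
proof -
  obtain p q where 1: "T = {m,p,q}" "E m p" "E m q" "E p q" using tri_form assms(2,3) by blast
  note b = midw_basic[OF assms(1)]
  have "p \<in> {a,b,c}" "q \<in> {a,b,c}" using 1 b(2) by (auto simp: nb_iff[symmetric])
  moreover have "p \<noteq> q" using 1 ne by blast
  moreover have "\<not> E c a" using b(1) sym by blast
  ultimately have "{p,q} = {a,b} \<or> {p,q} = {b,c}" using 1(4) b(1) by auto
  thus ?thesis using 1(1) by auto
qed

lemma mid_nbr:
  assumes "midw m a b c" "E m x" "Mid x"
  shows "x = b"
proof -
  have "x \<in> {a,b,c}" using midw_basic(2)[OF assms(1)] assms(2) by (auto simp: nb_iff[symmetric])
  thus ?thesis using midw_end_not_mid[OF assms(1)] midw_end_not_mid[OF midw_sym[OF assms(1)]] assms(3)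
    by auto
qed

definition N where "N = {T \<in> triangles V E. \<forall>v\<in>T. \<not> Mid v}"
definition A where "A T = {{x,u} | x u. x \<in> T \<and> u \<notin> T \<and> E x u}"

lemma finN: "finite N"
proof -
  have "N \<subseteq> Pow V" using tri_sub by (auto simp: N_def)
  thus ?thesis using finV finite_subset by blast
qed

lemma finA: "finite (A T)"
proof -
  have "A T \<subseteq> Pow V" using inV1 inV2 by (auto simp: A_def)
  thus ?thesis using finV finite_subset by blast
qed

lemma cardA: assumes "T \<in> N" shows "2 \<le> card (A T)"
proof -
  obtain p q r where T: "T = {p,q,r}" "E p q" "E p r" "E q r"
    using assms by (auto simp: N_def triangles_def)
  have d: "p \<noteq> q" "q \<noteq> r" "p \<noteq> r" using T(2-4) ne by blast+
  obtain p' where p': "E p p'" "p' \<noteq> q" "p' \<noteq> r" using third[OF T(2,3) d(2)] by blast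
  obtain q' where q': "E q q'" "q' \<noteq> p" "q' \<noteq> r" using third[OF sym[OF T(2)] T(4) d(3)] by blast
  have "p' \<noteq> p" "q' \<noteq> q" using ne[OF p'(1)] ne[OF q'(1)] by auto
  hence pq: "p' \<notin> T" "q' \<notin> T" using p' q' T(1) by auto
  have "{p,p'} \<in> A T" unfolding A_def using T(1) pq p'(1) by blast
  moreover have "{q,q'} \<in> A T" unfolding A_def using T(1) pq q'(1) by blast
  ultimately have sub: "{{p,p'},{q,q'}} \<subseteq> A T" by blast
  have "{p,p'} \<noteq> {q,q'}" using d(1) pq(2) T(1) by (auto simp: doubleton_eq_iff)
  hence "card {{p,p'},{q,q'}} = 2" by simp
  thus ?thesis using card_mono[OF finA sub] by simp
qed

lemma N_le1: "card {T \<in> N. x \<in> T} \<le> 1"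
proof -
  have fin: "finite {T \<in> N. x \<in> T}" using finN by simp
  have all: "\<forall>T1\<in>{T \<in> N. x \<in> T}. \<forall>T2\<in>{T \<in> N. x \<in> T}. T1 = T2"
  proof (intro ballI)
    fix T1 T2 assume a: "T1 \<in> {T \<in> N. x \<in> T}" "T2 \<in> {T \<in> N. x \<in> T}"
    hence "\<not> Mid x" "T1 \<in> triangles V E" "T2 \<in> triangles V E" "x \<in> T1" "x \<in> T2"
      by (auto simp: N_def)
    thus "T1 = T2" by (rule uniq_tri)
  qed
  have "card {T \<in> N. x \<in> T} \<le> Suc 0" using card_le_Suc0_iff_eq[OF fin] all by blast
  thus ?thesis by simp
qed

lemma multA: assumes "S \<subseteq> N" "e \<in> A T0" shows "card {T \<in> S. e \<in> A T} \<le> 2"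
proof -
  obtain x u where e: "e = {x,u}" using assms(2) by (auto simp: A_def)
  have "{T \<in> S. e \<in> A T} \<subseteq> {T \<in> N. x \<in> T} \<union> {T \<in> N. u \<in> T}"
  proof
    fix T assume T: "T \<in> {T \<in> S. e \<in> A T}"
    then obtain x' u' where "e = {x',u'}" "x' \<in> T" using T by (auto simp: A_def)
    hence "x' = x \<or> x' = u" using e by (auto simp: doubleton_eq_iff)
    thus "T \<in> {T \<in> N. x \<in> T} \<union> {T \<in> N. u \<in> T}" using T assms(1) \<open>x' \<in> T\<close> by blast
  qed
  hence "card {T \<in> S. e \<in> A T} \<le> card ({T \<in> N. x \<in> T} \<union> {T \<in> N. u \<in> T})"
    by (rule card_mono[rotated]) (use finN in auto)
  also have "\<dots> \<le> card {T \<in> N. x \<in> T} + card {T \<in> N. u \<in> T}" by (rule card_Un_le)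
  also have "\<dots> \<le> 2" using N_le1[of x] N_le1[of u] by simp
  finally show ?thesis .
qed

lemma hall_cond: assumes S: "S \<subseteq> N" shows "card S \<le> card (\<Union>(A ` S))"
proof -
  define U where "U = \<Union>(A ` S)"
  have finS: "finite S" using S finN finite_subset by blast
  have finU: "finite U" using finS finA by (auto simp: U_def)
  have eq: "(\<Sum>T\<in>S. card {e \<in> U. e \<in> A T}) = (\<Sum>e\<in>U. card {T \<in> S. e \<in> A T})"
    by (rule sum_multicount_gen) (use finS finU in auto)
  have "(\<Sum>T\<in>S. card {e \<in> U. e \<in> A T}) = (\<Sum>T\<in>S. card (A T))"
    by (rule sum.cong) (auto simp: U_def intro!: arg_cong[where f=card])
  moreover have "(\<Sum>T\<in>S. (2::nat)) \<le> (\<Sum>T\<in>S. card (A T))"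
    by (rule sum_mono) (use cardA S in auto)
  moreover have "(\<Sum>e\<in>U. card {T \<in> S. e \<in> A T}) \<le> (\<Sum>e\<in>U. (2::nat))"
    by (rule sum_mono) (use multA[OF S] in \<open>auto simp: U_def\<close>)
  ultimately have "2 * card S \<le> 2 * card U" using eq by simp
  thus ?thesis by (simp add: U_def)
qed

lemma N_mid_nadj:
  assumes "T \<in> N" "x \<in> T" "Mid y" "E y x"
  shows False
proof -
  have nx: "\<not> Mid x" and TT: "T \<in> triangles V E" using assms(1,2) by (auto simp: N_def)
  obtain a b c where w: "midw y a b c" using assms(3) by (auto simp: Mid_def)
  note bs = midw_basic[OF w]
  have "x \<in> {a,b,c}" using bs(2) assms(4) by (simp add: nb_iff[symmetric])
  moreover have "x \<noteq> b" using nx midw_partner[OF w] by (auto simp: Mid_def)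
  moreover have eE: "E y a" "E y b" "E y c" "E a b" "E b c" using w by (auto simp: midw_def)
  ultimately consider "x = a" | "x = c" by blast
  thus False
  proof cases
    case 1
    have "T = {y,a,b}" using uniq_tri[OF nx TT tri_mem[OF eE(1,2,4)]] assms(2) 1 by simp
    thus False using assms(1,3) by (auto simp: N_def)
  next
    case 2
    have "T = {y,b,c}" using uniq_tri[OF nx TT tri_mem[OF eE(2,3,5)]] assms(2) 2 by simp
    thus False using assms(1,3) by (auto simp: N_def)
  qed
qed

end

locale cfc2 = cfc +
  fixes f :: "'a set \<Rightarrow> 'a set" and ord :: "'a \<Rightarrow> nat"
  assumes fA: "\<forall>T\<in>N. f T \<in> A T" and finj: "inj_on f N" and oinj: "inj_on ord V"
begin

definition CM where "CM = {m \<in> V. Mid m \<and> (\<forall>m'. E m m' \<and> Mid m' \<longrightarrow> ord m < ord m')}"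
definition I where "I = (\<Union>T\<in>N. T \<inter> f T) \<union> CM"

lemma Tsing:
  assumes "T \<in> N"
  obtains x u where "T \<inter> f T = {x}" "f T = {x,u}" "x \<in> T" "u \<notin> T" "E x u"
proof -
  obtain x u where "f T = {x,u}" "x \<in> T" "u \<notin> T" "E x u" using fA assms by (auto simp: A_def)
  moreover hence "T \<inter> f T = {x}" by auto
  ultimately show ?thesis using that by blast
qed

lemma NN_nadj:
  assumes T: "T \<in> N" "x \<in> T \<inter> f T" and T': "T' \<in> N" "y \<in> T' \<inter> f T'" and xy: "E x y"
  shows False
proof -
  obtain x0 u0 where a: "T \<inter> f T = {x0}" "f T = {x0,u0}" "x0 \<in> T" "u0 \<notin> T" "E x0 u0"
    using Tsing[OF T(1)] by blast
  obtain y0 u1 where b: "T' \<inter> f T' = {y0}" "f T' = {y0,u1}" "y0 \<in> T'" "u1 \<notin> T'" "E y0 u1"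
    using Tsing[OF T'(1)] by blast
  have x0: "x = x0" using a T(2) by auto
  have y0: "y = y0" using b T'(2) by auto
  have nmx: "\<not> Mid x" and TT: "T \<in> triangles V E" using T by (auto simp: N_def)
  have nmy: "\<not> Mid y" and TT': "T' \<in> triangles V E" using T' by (auto simp: N_def)
  show False
  proof (cases "T = T'")
    case True thus False using a b x0 y0 xy ne by auto
  next
    case False
    have "y \<notin> T" using uniq_tri[OF nmy TT TT'] T'(2) False by blast
    have "x \<notin> T'" using uniq_tri[OF nmx TT TT'] T(2) False by blast
    have "u0 = y" using uniq_out[OF TT a(3) a(5)] x0 xy a(4) \<open>y \<notin> T\<close> by simp
    moreover have "u1 = x" using uniq_out[OF TT' b(3) b(5)] y0 sym[OF xy] b(4) \<open>x \<notin> T'\<close> by simp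
    ultimately have "f T = f T'" using a(2) b(2) x0 y0 by auto
    thus False using finj T(1) T'(1) False by (auto simp: inj_on_def)
  qed
qed

lemma indep: assumes "x \<in> I" "y \<in> I" "E x y" shows False
proof -
  have symxy: "E y x" using sym assms(3) by blast
  consider (a) "x \<in> (\<Union>T\<in>N. T \<inter> f T)" "y \<in> (\<Union>T\<in>N. T \<inter> f T)"
    | (b) "x \<in> (\<Union>T\<in>N. T \<inter> f T)" "y \<in> CM"
    | (c) "x \<in> CM" "y \<in> (\<Union>T\<in>N. T \<inter> f T)"
    | (d) "x \<in> CM" "y \<in> CM" using assms(1,2) by (auto simp: I_def)
  thus False
  proof cases
    case a thus False using NN_nadj assms(3) by blast
  next
    case b thus False using N_mid_nadj symxy by (auto simp: CM_def)
  next
    case c thus False using N_mid_nadj assms(3) by (auto simp: CM_def)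
  next
    case d
    hence "ord x < ord y" "ord y < ord x" using assms(3) symxy by (auto simp: CM_def)
    thus False by simp
  qed
qed

lemma diamond_one:
  assumes w: "midw m a b c"
  shows "\<exists>z. {m,a,b} \<inter> I = {z}"
proof -
  note bs = midw_basic[OF w]
  have eE: "E m a" "E m b" "E m c" "E a b" "E b c" using w by (auto simp: midw_def)
  have mm: "Mid m" using w by (auto simp: Mid_def)
  have mb: "Mid b" using midw_partner[OF w] by (auto simp: Mid_def)
  have na: "\<not> Mid a" using midw_end_not_mid[OF w] .
  have tri: "{m,a,b} \<in> triangles V E" using tri_mem[OF eE(1,2,4)] .
  have notN: "\<And>v T. T \<in> N \<Longrightarrow> v \<in> T \<Longrightarrow> v \<in> {m,a,b} \<Longrightarrow> False"
  proof -
    fix v T assume T: "T \<in> N" "v \<in> T" "v \<in> {m,a,b}"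
    have nv: "\<not> Mid v" and TT: "T \<in> triangles V E" using T by (auto simp: N_def)
    have "v = a" using T(3) nv mm mb by auto
    hence "T = {m,a,b}" using uniq_tri[OF nv TT tri] T(2) by simp
    thus False using T(1) mm by (auto simp: N_def)
  qed
  have "a \<notin> CM" using na by (simp add: CM_def)
  moreover have "a \<notin> (\<Union>T\<in>N. T \<inter> f T)" using notN[of _ a] by blast
  ultimately have aI: "a \<notin> I" by (simp add: I_def)
  have mV: "m \<in> V" "b \<in> V" using inV1[OF eE(1)] inV2[OF eE(2)] by auto
  have q1: "(\<forall>m'. E m m' \<and> Mid m' \<longrightarrow> ord m < ord m') \<longleftrightarrow> ord m < ord b"
    using mid_nbr[OF w] eE(2) mb by blast
  have mCM: "m \<in> CM \<longleftrightarrow> ord m < ord b" using q1 mm mV by (simp add: CM_def)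
  have q2: "(\<forall>m'. E b m' \<and> Mid m' \<longrightarrow> ord b < ord m') \<longleftrightarrow> ord b < ord m"
    using mid_nbr[OF midw_partner[OF w]] sym[OF eE(2)] mm by blast
  have bCM: "b \<in> CM \<longleftrightarrow> ord b < ord m" using q2 mb mV by (simp add: CM_def)
  have "m \<notin> (\<Union>T\<in>N. T \<inter> f T)" "b \<notin> (\<Union>T\<in>N. T \<inter> f T)"
    using notN[of _ m] notN[of _ b] by blast+
  hence mI: "m \<in> I \<longleftrightarrow> m \<in> CM" and bI: "b \<in> I \<longleftrightarrow> b \<in> CM" by (auto simp: I_def)
  have "ord m \<noteq> ord b" using oinj mV bs(7) by (auto simp: inj_on_def)
  hence "ord m < ord b \<or> ord b < ord m" by linarith
  thus ?thesis
  proof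
    assume "ord m < ord b"
    hence "{m,a,b} \<inter> I = {m}" using mCM bCM mI bI aI by auto
    thus ?thesis by blast
  next
    assume "ord b < ord m"
    hence "{m,a,b} \<inter> I = {b}" using mCM bCM mI bI aI by auto
    thus ?thesis by blast
  qed
qed

lemma tri_one:
  assumes T: "T \<in> triangles V E"
  shows "\<exists>z. T \<inter> I = {z}"
proof (cases "T \<in> N")
  case True
  obtain x u where a: "T \<inter> f T = {x}" "f T = {x,u}" "x \<in> T" "u \<notin> T" "E x u"
    using Tsing[OF True] by blast
  have "T \<inter> I = {x}"
  proof
    show "{x} \<subseteq> T \<inter> I" using a True by (auto simp: I_def)
    show "T \<inter> I \<subseteq> {x}"
    proof
      fix y assume y: "y \<in> T \<inter> I"
      have ny: "\<not> Mid y" using True y by (auto simp: N_def)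
      hence "y \<notin> CM" by (auto simp: CM_def)
      then obtain T' where T': "T' \<in> N" "y \<in> T' \<inter> f T'" using y by (auto simp: I_def)
      have "T' = T" using uniq_tri[OF ny, of T' T] T' True y by (auto simp: N_def)
      thus "y \<in> {x}" using T' a(1) by auto
    qed
  qed
  thus ?thesis by blast
next
  case False
  then obtain m where m: "m \<in> T" "Mid m" using T by (auto simp: N_def)
  then obtain a b c where w: "midw m a b c" by (auto simp: Mid_def)
  from mid_tri[OF w T m(1)] show ?thesis
  proof
    assume "T = {m,a,b}" thus ?thesis using diamond_one[OF w] by simp
  next
    assume "T = {m,b,c}"
    hence "T = {m,c,b}" by auto
    thus ?thesis using diamond_one[OF midw_sym[OF w]] by simp
  qed
qed

lemma result2: "\<exists>P. vertex_cover V E P \<and> (\<forall>T\<in>triangles V E. card (T \<inter> P) = 2)"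
proof (intro exI conjI ballI)
  show "vertex_cover V E (V - I)"
    unfolding vertex_cover_def using indep inV1 inV2 by blast
next
  fix T assume T: "T \<in> triangles V E"
  obtain z where z: "T \<inter> I = {z}" using tri_one[OF T] by blast
  have "T \<inter> (V - I) = T - I" using tri_sub[OF T] by blast
  moreover have "card (T - I) = card T - card (T \<inter> I)"
    by (rule card_Diff_subset_Int) (use z in auto)
  ultimately show "card (T \<inter> (V - I)) = 2" using tri_card[OF T] z by simp
qed

end

context cfc begin
lemma result: "\<exists>P. vertex_cover V E P \<and> (\<forall>T\<in>triangles V E. card (T \<inter> P) = 2)"
proof -
  have h1: "\<forall>S\<subseteq>N. card S \<le> card (\<Union>(A ` S))" using hall_cond by blast
  have h2: "\<forall>T\<in>N. finite (A T)" using finA by blast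
  obtain f where f: "\<forall>T\<in>N. f T \<in> A T" "inj_on f N"
    using hall[OF finN h2 h1] by blast
  obtain ord :: "'a \<Rightarrow> nat" and n where "ord ` V = {i. i < n}" "inj_on ord V"
    using finite_imp_inj_to_nat_seg[OF finV] by blast
  interpret cfc2 V E f ord
    by (rule cfc2.intro, rule cfc_axioms, rule cfc2_axioms.intro) (use f \<open>inj_on ord V\<close> in auto)
  show ?thesis by (rule result2)
qed
end

theorem lemma3p11:
  fixes V :: "'a set" and E :: "'a \<Rightarrow> 'a \<Rightarrow> bool"
  assumes "simple_graph V E"
    and "connected_graph V E"
    and "claw_free V E"
    and "cubic V E"
    and "\<not> is_K4 V E"
  shows "\<exists>P. vertex_cover V E P \<and> (\<forall>T\<in>triangles V E. card (T \<inter> P) = 2)"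
proof -
  interpret cfc V E using assms by unfold_locales
  show ?thesis by (rule result)
qed

end
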